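(* Let $0<q<1/2$, $p=1-q$, $s=4pq$ (so $0<s<1$), and for integers $z\ge1$ let $$P(z)=1-\sum_{k=0}^{z-1}\left(p^zq^k-q^zp^k\right)\binom{k+z-1}{k}.$$ Then as $z\to+\infty$, $$P(z)\sim\frac{s^z}{\sqrt{\pi(1-s)z}}.$$
   Context: $P(z)$ is the probability of success of a double-spend attack by attackers with relative hash power $q$ after $z$ confirmations by the honest miners. The symbol $\sim$ means that the ratio tends to $1$. *)

theory Defs
  imports "HOL-Analysis.Analysis" "HOL-Library.Landau_Symbols"
begin

text \<open>Probability of success of a double-spend attack after z confirmations,
  attacker relative hash power q, p = 1 - q.\<close>
definition attackP :: "real \<Rightarrow> nat \<Rightarrow> real" where
  "attackP q z = 1 - (\<Sum>k<z. ((1 - q) ^ z * q ^ k - q ^ z * (1 - q) ^ k) * real ((k + z - 1) choose k))"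

end

theory Submission
  imports Defs "HOL-Real_Asymp.Real_Asymp"
begin


lemma partial_sum_id:
  fixes x y :: real
  assumes "x + y = 1" and "z \<ge> 1"
  shows "(\<Sum>k<z. x ^ k * real ((k + z - 1) choose k)) =
         (\<Sum>k<z. real ((2*z - 1) choose k) * x ^ k * y ^ (z - 1 - k))"
proof -
  have L: "{..<z} = {..z-1}" using assms by auto
  have "(\<Sum>k\<le>z-1. (of_nat (z-1) + of_nat z gchoose k) * x^k * y^(z-1-k)) =
     (\<Sum>k\<le>z-1. (of_nat k + of_nat z - 1 gchoose k) * x^k * (x + y)^(z-1-k))"
    by (rule gbinomial_partial_sum_poly_xpos)
  moreover have "\<And>k. (of_nat (z-1) + of_nat z gchoose k) = (real ((2*z - 1) choose k))"
    using assms by (simp add: binomial_gbinomial of_nat_diff)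
  moreover have "\<And>k. (of_nat k + of_nat z - 1 gchoose k) = real ((k + z - 1) choose k)"
    using assms by (simp add: binomial_gbinomial of_nat_diff)
  ultimately show ?thesis using assms unfolding L by (simp add: mult_ac)
qed



definition Bs :: "real \<Rightarrow> nat \<Rightarrow> real" where
  "Bs q z = (\<Sum>k<z. real ((2*z - 1) choose k) * (1-q) ^ k * q ^ (2*z - 1 - k))"

lemma attackP_eq:
  assumes "z \<ge> 1"
  shows "attackP q z = 2 * Bs q z"
proof -
  define p where "p = 1 - q"
  define n where "n = 2*z - 1"
  have pq: "p + q = 1" "q + p = 1" by (simp_all add: p_def)
  have A: "(\<Sum>k<z. p ^ z * q ^ k * real ((k + z - 1) choose k)) =
        (\<Sum>k<z. real (n choose k) * q ^ k * p ^ (n - k))"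
  proof -
    have "(\<Sum>k<z. p ^ z * q ^ k * real ((k + z - 1) choose k)) =
       p^z * (\<Sum>k<z. q ^ k * real ((k + z - 1) choose k))"
      by (simp add: sum_distrib_left mult_ac)
    also have "\<dots> = p^z * (\<Sum>k<z. real (n choose k) * q ^ k * p ^ (z - 1 - k))"
      using partial_sum_id[OF pq(2) assms] by (simp add: n_def)
    also have "\<dots> = (\<Sum>k<z. real (n choose k) * q ^ k * p ^ (n - k))"
      unfolding sum_distrib_left
    proof (rule sum.cong[OF refl])
      fix k assume "k \<in> {..<z}"
      then have "n - k = z + (z - 1 - k)" using assms by (auto simp: n_def)
      then show "p ^ z * (real (n choose k) * q ^ k * p ^ (z - 1 - k)) =
            real (n choose k) * q ^ k * p ^ (n - k)" by (simp add: power_add)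
    qed
    finally show ?thesis .
  qed
  have B: "(\<Sum>k<z. q ^ z * p ^ k * real ((k + z - 1) choose k)) =
        (\<Sum>k<z. real (n choose k) * p ^ k * q ^ (n - k))"
  proof -
    have "(\<Sum>k<z. q ^ z * p ^ k * real ((k + z - 1) choose k)) =
       q^z * (\<Sum>k<z. p ^ k * real ((k + z - 1) choose k))"
      by (simp add: sum_distrib_left mult_ac)
    also have "\<dots> = q^z * (\<Sum>k<z. real (n choose k) * p ^ k * q ^ (z - 1 - k))"
      using partial_sum_id[OF pq(1) assms] by (simp add: n_def)
    also have "\<dots> = (\<Sum>k<z. real (n choose k) * p ^ k * q ^ (n - k))"
      unfolding sum_distrib_left
    proof (rule sum.cong[OF refl])
      fix k assume "k \<in> {..<z}"
      then have "n - k = z + (z - 1 - k)" using assms by (auto simp: n_def)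
      then show "q ^ z * (real (n choose k) * p ^ k * q ^ (z - 1 - k)) =
            real (n choose k) * p ^ k * q ^ (n - k)" by (simp add: power_add)
    qed
    finally show ?thesis .
  qed
  have tot: "(\<Sum>k<z. real (n choose k) * q ^ k * p ^ (n - k)) +
             (\<Sum>k<z. real (n choose k) * p ^ k * q ^ (n - k)) = 1"
  proof -
    have "(\<Sum>k<z. real (n choose k) * p ^ k * q ^ (n - k)) =
          (\<Sum>k\<in>{z..n}. real (n choose k) * q ^ k * p ^ (n - k))"
    proof (rule sum.reindex_bij_witness[where i="\<lambda>k. n - k" and j="\<lambda>k. n - k"])
      fix k assume "k \<in> {z..n}"
      then show "n - (n - k) = k" "n - k \<in> {..<z}" using assms by (auto simp: n_def)
    next
      fix k assume k: "k \<in> {..<z}"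
      then show "n - (n - k) = k" "n - k \<in> {z..n}" using assms by (auto simp: n_def)
      have "n - (n - k) = k" using k assms by (auto simp: n_def)
      then show "real (n choose (n - k)) * q ^ (n - k) * p ^ (n - (n - k)) =
           real (n choose k) * p ^ k * q ^ (n - k)"
        using k assms binomial_symmetric[of k n] by (simp add: n_def)
    qed
    moreover have "{..<z} \<union> {z..n} = {..n}" "{..<z} \<inter> {z..n} = {}" using assms
      by (auto simp: n_def)
    moreover have "(\<Sum>k\<le>n. real (n choose k) * q ^ k * p ^ (n - k)) = 1"
      using binomial_ring[of q p n] pq by (simp add: mult_ac)
    ultimately show ?thesis
      by (metis (no_types, lifting) finite_atLeastAtMost finite_lessThan sum.union_disjoint)
  qed
  have "attackP q z = 1 - ((\<Sum>k<z. p ^ z * q ^ k * real ((k + z - 1) choose k)) -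
            (\<Sum>k<z. q ^ z * p ^ k * real ((k + z - 1) choose k)))"
    unfolding attackP_def p_def by (simp add: sum_subtractf algebra_simps)
  also have "\<dots> = 2 * Bs q z" unfolding A B Bs_def p_def[symmetric] n_def[symmetric]
    using tot by simp
  finally show ?thesis .
qed



lemma central_binom_Suc:
  "real (2 * Suc k choose Suc k) = real (2*k choose k) * (2 * (2*real k + 1)) / (real k + 1)"
proof -
  define X where "X = real (2 * Suc k choose Suc k)"
  define Y where "Y = real ((2*k+1) choose k)"
  define Z where "Z = real (2*k choose k)"
  have e1: "Suc k * (Suc (2*k+1) choose Suc k) = Suc (2*k+1) * ((2*k+1) choose k)"
    by (rule Suc_times_binomial)
  have e2: "Suc k * (Suc (2*k) choose Suc k) = Suc (2*k) * ((2*k) choose k)"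
    by (rule Suc_times_binomial)
  have e3: "(2*k+1) choose k = (2*k+1) choose (Suc k)"
    using binomial_symmetric[of k "2*k+1"] by simp
  have s: "Suc (2*k+1) = 2 * Suc k" by simp
  have a: "real (Suc k) * X = real (Suc (2*k+1)) * Y"
    using arg_cong[OF e1, of real] unfolding s of_nat_mult X_def Y_def .
  have b0: "real (Suc k) * real ((2*k+1) choose Suc k) = real (Suc (2*k)) * Z"
    using arg_cong[OF e2, of real] unfolding of_nat_mult Z_def Suc_eq_plus1 .
  have b: "real (Suc k) * Y = real (Suc (2*k)) * Z"
    using b0 unfolding Y_def e3 .
  have r1: "real (Suc k) = real k + 1" "real (Suc (2*k+1)) = 2*real k+2" "real (Suc (2*k)) = 2*real k+1"
    by simp_all
  have a': "(real k + 1) * X = (2*real k+2) * Y" using a unfolding r1 .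
  have b': "(real k + 1) * Y = (2*real k+1) * Z" using b unfolding r1 .
  have "(real k + 1) * ((real k + 1) * X) = (real k + 1) * (Z * (2 * (2*real k + 1)))"
  proof -
    have "(real k + 1) * ((real k + 1) * X) = (2*real k+2) * ((real k + 1) * Y)"
      using a' by (simp add: algebra_simps)
    also have "\<dots> = (real k + 1) * (Z * (2 * (2*real k + 1)))"
      using b' by (simp add: algebra_simps)
    finally show ?thesis .
  qed
  then have "(real k + 1) * X = Z * (2 * (2*real k + 1))"
    by (subst (asm) mult_left_cancel) auto
  then have "X = Z * (2 * (2*real k + 1)) / (real k + 1)"
    by (simp add: field_simps)
  then show ?thesis unfolding X_def Z_def .
qed

lemma gchoose_half: "((-1/2::real) gchoose n) = (-1)^n * real (2*n choose n) / 4^n"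
proof (induction n)
  case 0 then show ?case by simp
next
  case (Suc k)
  have "(-1/2::real) * ((-1/2) gchoose k) = real k * ((-1/2) gchoose k) + real (Suc k) * ((-1/2) gchoose Suc k)"
    by (rule gbinomial_mult_1)
  then have h: "((-1/2::real) gchoose Suc k) = - (2*real k + 1) / (2*real k + 2) * ((-1/2) gchoose k)"
    by (simp add: field_simps)
  have h4: "(4::real) ^ Suc k = 4 * 4 ^ k" by simp
  show ?case unfolding h Suc.IH central_binom_Suc h4 power_Suc
    by (simp add: divide_simps) (simp add: algebra_simps)
qed



lemma aux_div: "(a::real) \<noteq> 0 \<Longrightarrow> (a * c / b) / (a / s) = c * s / b"
  by (cases "b=0"; cases "s=0") (simp_all add: field_simps)

lemma central_binom_lim:
  "(\<lambda>n. real (2*n choose n) * sqrt (pi * real n) / 4^n) \<longlonglongrightarrow> 1"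
proof -
  have L: "(\<lambda>n. ((-1/2::real) gchoose n) / ((-1)^n / exp ((-1/2+1) * of_real (ln (real n)))))
      \<longlonglongrightarrow> inverse (Gamma (- (-1/2)))"
    using gbinomial_asymptotic[of "-1/2::real"] .
  have G: "inverse (Gamma (- (-1/2::real))) = 1 / sqrt pi"
  proof -
    have "- (-1/2::real) = 1/2" by simp
    then show ?thesis by (simp only: Gamma_one_half_real inverse_eq_divide)
  qed
  have ev: "eventually (\<lambda>n. ((-1/2::real) gchoose n) / ((-1)^n / exp ((-1/2+1) * of_real (ln (real n))))
      = real (2*n choose n) * sqrt (real n) / 4^n) sequentially"
    using eventually_gt_at_top[of "0::nat"]
  proof eventually_elim
    case (elim n)
    have "exp ((-1/2+1) * of_real (ln (real n))) = real n powr (1/2)"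
      using elim by (simp add: powr_def)
    also have "\<dots> = sqrt (real n)" by (simp add: powr_half_sqrt)
    finally have e: "exp ((-1/2+1) * of_real (ln (real n))) = sqrt (real n)" .
    show ?case unfolding gchoose_half e
      by (rule aux_div) simp
  qed
  have "(\<lambda>n. real (2*n choose n) * sqrt (real n) / 4^n) \<longlonglongrightarrow> 1 / sqrt pi"
    using Lim_transform_eventually[OF L ev] G by simp
  then have "(\<lambda>n. sqrt pi * (real (2*n choose n) * sqrt (real n) / 4^n)) \<longlonglongrightarrow> sqrt pi * (1 / sqrt pi)"
    by (intro tendsto_mult tendsto_const)
  then show ?thesis by (simp add: real_sqrt_mult mult_ac)
qed



definition rho :: "nat \<Rightarrow> nat \<Rightarrow> real" where
  "rho m j = (\<Prod>i<j. (real m - real i) / (real m + 2 + real i))"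

lemma binom_ratio:
  "j \<le> m \<Longrightarrow> real ((2*m+1) choose (m - j)) = real ((2*m+1) choose m) * rho m j"
proof (induction j)
  case 0 then show ?case by (simp add: rho_def)
next
  case (Suc j)
  define k where "k = m - Suc j"
  have k1: "Suc k = m - j" using Suc.prems by (simp add: k_def)
  have "(2*m+1 - k) * ((2*m+1) choose k) = (2*m+1) * ((2*m+1 - 1) choose k)"
    by (rule binomial_absorb_comp)
  also have "\<dots> = Suc k * ((2*m+1) choose Suc k)"
    using Suc_times_binomial[of k "2*m"] by simp
  finally have e: "(2*m+1 - k) * ((2*m+1) choose k) = Suc k * ((2*m+1) choose Suc k)" .
  have nk: "real (2*m+1 - k) = real m + 2 + real j" using Suc.prems by (simp add: k_def of_nat_diff)
  have sk: "real (m - j) = real m - real j" using Suc.prems by (simp add: of_nat_diff)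
  have e': "(real m + 2 + real j) * real ((2*m+1) choose k) = (real m - real j) * real ((2*m+1) choose (m - j))"
    using arg_cong[OF e, of real] unfolding of_nat_mult nk k1 sk .
  have "real ((2*m+1) choose k) = real ((2*m+1) choose (m - j)) * ((real m - real j) / (real m + 2 + real j))"
    using e' by (simp add: field_simps add_pos_nonneg)
  also have "\<dots> = real ((2*m+1) choose m) * rho m (Suc j)"
    using Suc by (simp add: rho_def)
  finally show ?case by (simp add: k_def)
qed

lemma rho_bounds: "j \<le> m \<Longrightarrow> 0 \<le> rho m j" "j \<le> m \<Longrightarrow> rho m j \<le> 1"
  unfolding rho_def
  by (auto intro!: prod_nonneg prod_le_1 divide_nonneg_pos)

lemma rho_lim: "(\<lambda>m. rho m j) \<longlonglongrightarrow> 1"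
proof -
  have "(\<lambda>m. \<Prod>i<j. (real m - real i) / (real m + 2 + real i)) \<longlonglongrightarrow> (\<Prod>i<j. 1)"
  proof (rule tendsto_prod)
    fix i :: nat
    show "(\<lambda>m. (real m - real i) / (real m + 2 + real i)) \<longlonglongrightarrow> 1"
      by real_asymp
  qed
  then show ?thesis by (simp add: rho_def)
qed



lemma tannery_geom:
  fixes r :: real
  assumes r: "0 \<le> r" "r < 1"
  shows "(\<lambda>m. \<Sum>j\<le>m. rho m j * r ^ j) \<longlonglongrightarrow> 1 / (1 - r)"
proof -
  define s where "s = (\<lambda>m j. if j \<le> m then rho m j * r ^ j else 0)"
  define w where "w = (\<lambda>j::nat. r ^ j)"
  have intw: "integrable (count_space UNIV) w"
    unfolding integrable_count_space_nat_iff w_def using r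
    by (simp add: summable_geometric)
  have lim: "AE j in count_space UNIV. (\<lambda>m. s m j) \<longlonglongrightarrow> w j"
  proof (rule AE_I2)
    fix j
    have "(\<lambda>m. rho m j * r ^ j) \<longlonglongrightarrow> 1 * r ^ j"
      by (intro tendsto_mult rho_lim tendsto_const)
    moreover have "eventually (\<lambda>m. rho m j * r ^ j = s m j) sequentially"
      using eventually_ge_at_top[of j] by eventually_elim (simp add: s_def)
    ultimately show "(\<lambda>m. s m j) \<longlonglongrightarrow> w j"
      unfolding w_def using Lim_transform_eventually by fastforce
  qed
  have bound: "\<And>m. AE j in count_space UNIV. norm (s m j) \<le> w j"
  proof (rule AE_I2)
    fix m j
    show "norm (s m j) \<le> w j"
    proof (cases "j \<le> m")
      case True
      then have "0 \<le> rho m j" "rho m j \<le> 1" using rho_bounds by auto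
      then show ?thesis using True r unfolding s_def w_def
        by (simp add: abs_mult mult_left_le_one_le)
    qed (use r in \<open>simp add: s_def w_def\<close>)
  qed
  have meas: "w \<in> borel_measurable (count_space UNIV)" "\<And>m. s m \<in> borel_measurable (count_space UNIV)"
    by auto
  have conv: "(\<lambda>m. integral\<^sup>L (count_space UNIV) (s m)) \<longlonglongrightarrow> integral\<^sup>L (count_space UNIV) w"
    by (rule integral_dominated_convergence[OF meas intw lim bound])
  have ints: "\<And>m. integrable (count_space UNIV) (s m)"
    by (rule integrable_dominated_convergence2[OF meas intw lim bound])
  have e1: "\<And>m. integral\<^sup>L (count_space UNIV) (s m) = (\<Sum>j\<le>m. rho m j * r ^ j)"
  proof -
    fix m
    have "integral\<^sup>L (count_space UNIV) (s m) = (\<Sum>j. s m j)"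
      by (rule integral_count_space_nat[OF ints])
    also have "\<dots> = (\<Sum>j\<le>m. s m j)"
      by (rule suminf_finite) (auto simp: s_def)
    also have "\<dots> = (\<Sum>j\<le>m. rho m j * r ^ j)"
      by (rule sum.cong) (auto simp: s_def)
    finally show "integral\<^sup>L (count_space UNIV) (s m) = (\<Sum>j\<le>m. rho m j * r ^ j)" .
  qed
  have e2: "integral\<^sup>L (count_space UNIV) w = 1 / (1 - r)"
    using integral_count_space_nat[OF intw] suminf_geometric[of r] r unfolding w_def by simp
  show ?thesis using conv unfolding e1 e2 .
qed



lemma Bs_factor:
  assumes q: "0 < q" "q < 1"
  shows "Bs q (Suc m) = real ((2*m+1) choose m) * (1-q)^m * q^(m+1) *
           (\<Sum>j\<le>m. rho m j * (q/(1-q)) ^ j)"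
proof -
  define p where "p = 1 - q"
  have p: "p > 0" using q by (simp add: p_def)
  have "Bs q (Suc m) = (\<Sum>k<Suc m. real ((2*m+1) choose k) * p ^ k * q ^ (2*m+1 - k))"
    by (simp add: Bs_def p_def)
  also have "\<dots> = (\<Sum>j\<le>m. real ((2*m+1) choose (m - j)) * p ^ (m - j) * q ^ (2*m+1 - (m - j)))"
    by (rule sum.reindex_bij_witness[where i="\<lambda>k. m - k" and j="\<lambda>k. m - k"]) auto
  also have "\<dots> = (\<Sum>j\<le>m. real ((2*m+1) choose m) * p^m * q^(m+1) * (rho m j * (q/p) ^ j))"
  proof (rule sum.cong[OF refl])
    fix j assume j: "j \<in> {..m}"
    then have jm: "j \<le> m" by simp
    have e1: "2*m+1 - (m - j) = (m+1) + j" using jm by simp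
    have e2: "p ^ m = p ^ (m - j) * p ^ j" using jm by (simp add: power_add[symmetric])
    show "real ((2*m+1) choose (m - j)) * p ^ (m - j) * q ^ (2*m+1 - (m - j)) =
          real ((2*m+1) choose m) * p^m * q^(m+1) * (rho m j * (q/p) ^ j)"
      unfolding binom_ratio[OF jm] e1 e2 power_add using p
      by (simp add: power_divide field_simps)
  qed
  also have "\<dots> = real ((2*m+1) choose m) * p^m * q^(m+1) * (\<Sum>j\<le>m. rho m j * (q/p) ^ j)"
    by (simp add: sum_distrib_left)
  finally show ?thesis by (simp add: p_def)
qed

lemma central_twice: "real (2 * Suc m choose Suc m) = 2 * real ((2*m+1) choose m)"
proof -
  have "2 * Suc m choose Suc m = ((2*m+1) choose m) + ((2*m+1) choose Suc m)"
    using binomial_Suc_Suc[of "2*m+1" m] by simp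
  moreover have "(2*m+1) choose Suc m = (2*m+1) choose m"
    using binomial_symmetric[of m "2*m+1"] by simp
  ultimately show ?thesis by simp
qed



theorem mainTheorem4:
  fixes q :: real
  assumes "0 < q" and "q < 1/2"
  shows "(\<lambda>z. attackP q z) \<sim>[at_top]
         (\<lambda>z. (4 * (1 - q) * q) ^ z / sqrt (pi * (1 - 4 * (1 - q) * q) * real z))"
proof (rule asymp_equivI')
  define p where "p = 1 - q"
  define r where "r = q / p"
  define S where "S = (\<lambda>m. \<Sum>j\<le>m. rho m j * r ^ j)"
  define CB where "CB = (\<lambda>n. real (2*n choose n) * sqrt (pi * real n) / 4^n)"
  have p: "p > 0" "q < p" using assms by (auto simp: p_def)
  have r: "0 \<le> r" "r < 1" using assms p by (auto simp: r_def)
  have sq: "1 - 4 * (1 - q) * q = (p - q)^2" by (simp add: p_def power2_eq_square algebra_simps)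
  have key: "attackP q (Suc m) / ((4 * (1 - q) * q) ^ Suc m / sqrt (pi * (1 - 4 * (1 - q) * q) * real (Suc m)))
        = CB (Suc m) * S m * ((p - q) / p)" for m
  proof -
    have q1: "q < 1" using assms by simp
    define C where "C = real ((2*m+1) choose m)"
    have A: "attackP q (Suc m) = 2 * C * p^m * q^(m+1) * S m"
      unfolding attackP_eq[of "Suc m" q, simplified] Bs_factor[of q m, OF assms(1) q1] using assms
      by (simp add: C_def S_def r_def p_def)
    have sqrt_eq: "sqrt (pi * (1 - 4 * (1 - q) * q) * real (Suc m)) = (p - q) * sqrt (pi * real (Suc m))"
      unfolding sq using p by (simp add: real_sqrt_mult)
    have CBe: "CB (Suc m) = 2 * C * sqrt (pi * real (Suc m)) / 4 ^ Suc m"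
      unfolding CB_def central_twice C_def by simp
    have pw: "(4 * (1 - q) * q) ^ Suc m = 4 ^ Suc m * p * p^m * q^(m+1)"
    proof -
      have "(4 * (1 - q) * q) ^ Suc m = (4 * p * q) ^ Suc m" by (simp add: p_def)
      also have "\<dots> = 4 ^ Suc m * p ^ Suc m * q ^ Suc m" by (simp only: power_mult_distrib)
      also have "\<dots> = 4 ^ Suc m * p * p^m * q^(m+1)" by (simp add: mult_ac)
      finally show ?thesis .
    qed
    have pos: "sqrt (pi * real (Suc m)) > 0" by simp
    show ?thesis unfolding A sqrt_eq CBe pw using p pos assms(1)
      by (simp add: field_simps)
  qed
  have lim1: "(\<lambda>m. CB (Suc m)) \<longlonglongrightarrow> 1"
    using central_binom_lim unfolding CB_def by (rule LIMSEQ_Suc)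
  have lim2: "S \<longlonglongrightarrow> 1 / (1 - r)" unfolding S_def by (rule tannery_geom[OF r])
  have one: "1 * (1 / (1 - r)) * ((p - q) / p) = 1"
    using p by (simp add: r_def field_simps)
  have "(\<lambda>m. CB (Suc m) * S m * ((p - q) / p)) \<longlonglongrightarrow> 1 * (1 / (1 - r)) * ((p - q) / p)"
    by (intro tendsto_mult lim1 lim2 tendsto_const)
  then have "(\<lambda>m. attackP q (Suc m) / ((4 * (1 - q) * q) ^ Suc m / sqrt (pi * (1 - 4 * (1 - q) * q) * real (Suc m)))) \<longlonglongrightarrow> 1"
    unfolding key one .
  then show "((\<lambda>z. attackP q z / ((4 * (1 - q) * q) ^ z / sqrt (pi * (1 - 4 * (1 - q) * q) * real z))) \<longlongrightarrow> 1) at_top"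
    by (rule LIMSEQ_imp_Suc)
qed


end
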